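(* Let $R$ be a ring and $S\in\max\mathrm{Den}_l(R)$. Then the ring $S^{-1}R$ is a division ring if and only if $R=S\cup\mathrm{ass}(S)$.
   Context: All rings are associative with $1$. A multiplicative subset $S$ of $R$ ($1\in S$, $0\notin S$, closed under multiplication) is a left Ore set if $Sr\cap Rs\neq\emptyset$ for all $r\in R$, $s\in S$; for it, $\mathrm{ass}(S):=\{r\in R: sr=0\text{ for some } s\in S\}$. A left Ore set $S$ is a left denominator set if $rs=0$ ($r\in R$, $s\in S$) implies $tr=0$ for some $t\in S$; $S^{-1}R$ is the left localization. $\max\mathrm{Den}_l(R)$ is the set of maximal elements, under inclusion, of the set of left denominator sets of $R$. *)

theory Defs
  imports "HOL-Algebra.Ring"
begin

text \<open>The ambient ring R is the whole type 'a (of class ring_1); subsets of R are sets of type 'a set.\<close>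

definition mult_subset :: "'a::ring_1 set \<Rightarrow> bool" where
  "mult_subset S \<longleftrightarrow> 1 \<in> S \<and> 0 \<notin> S \<and> (\<forall>a\<in>S. \<forall>b\<in>S. a * b \<in> S)"

definition left_ore :: "'a::ring_1 set \<Rightarrow> bool" where
  "left_ore S \<longleftrightarrow> mult_subset S \<and>
     (\<forall>r s. s \<in> S \<longrightarrow> (\<exists>t\<in>S. \<exists>a. t * r = a * s))"

definition ass :: "'a::ring_1 set \<Rightarrow> 'a set" where
  "ass S = {r. \<exists>s\<in>S. s * r = 0}"

definition left_den :: "'a::ring_1 set \<Rightarrow> bool" where
  "left_den S \<longleftrightarrow> left_ore S \<and>
     (\<forall>r s. s \<in> S \<and> r * s = 0 \<longrightarrow> (\<exists>t\<in>S. t * r = 0))"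

definition maxDen_l :: "'a::ring_1 set set" where
  "maxDen_l = {S. left_den S \<and> (\<forall>T. left_den T \<and> S \<subseteq> T \<longrightarrow> T = S)}"

text \<open>Left fractions: a pair (s, r) with s in S stands for s^{-1} r.
  (s, r) ~ (s', r') iff a s = a' s' \<in> S and a r = a' r' for some a, a'.\<close>

definition loc_rel :: "'a::ring_1 set \<Rightarrow> (('a \<times> 'a) \<times> ('a \<times> 'a)) set" where
  "loc_rel S = {((s, r), (s', r')). s \<in> S \<and> s' \<in> S \<and>
      (\<exists>a a'. a * s = a' * s' \<and> a * s \<in> S \<and> a * r = a' * r')}"

definition loc_class :: "'a::ring_1 set \<Rightarrow> 'a \<Rightarrow> 'a \<Rightarrow> ('a \<times> 'a) set" where
  "loc_class S s r = loc_rel S `` {(s, r)}"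

text \<open>s^{-1}r + s'^{-1}r' = (t s)^{-1}(t r + a r') where t s = a s', t \<in> S.\<close>
definition loc_add :: "'a::ring_1 set \<Rightarrow> ('a \<times> 'a) set \<Rightarrow> ('a \<times> 'a) set \<Rightarrow> ('a \<times> 'a) set" where
  "loc_add S X Y = (SOME Z. \<exists>s r s' r' t a. (s, r) \<in> X \<and> (s', r') \<in> Y \<and>
      t \<in> S \<and> t * s = a * s' \<and> Z = loc_class S (t * s) (t * r + a * r'))"

text \<open>(s^{-1}r)(s'^{-1}r') = (u s)^{-1}(v r') where u r = v s', u \<in> S.\<close>
definition loc_mult :: "'a::ring_1 set \<Rightarrow> ('a \<times> 'a) set \<Rightarrow> ('a \<times> 'a) set \<Rightarrow> ('a \<times> 'a) set" where
  "loc_mult S X Y = (SOME Z. \<exists>s r s' r' u v. (s, r) \<in> X \<and> (s', r') \<in> Y \<and>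
      u \<in> S \<and> u * r = v * s' \<and> Z = loc_class S (u * s) (v * r'))"

definition left_loc :: "'a::ring_1 set \<Rightarrow> ('a \<times> 'a) set ring" where
  "left_loc S = \<lparr> carrier = (S \<times> UNIV) // loc_rel S,
                   monoid.mult = loc_mult S,
                   one = loc_class S 1 1,
                   zero = loc_class S 1 0,
                   add = loc_add S \<rparr>"

definition division_ring :: "('b, 'm) ring_scheme \<Rightarrow> bool" where
  "division_ring K \<longleftrightarrow> ring K \<and> \<one>\<^bsub>K\<^esub> \<noteq> \<zero>\<^bsub>K\<^esub> \<and>
     (\<forall>x \<in> carrier K - {\<zero>\<^bsub>K\<^esub>}. x \<in> Units K)"

end

theory Submission
  imports Defs
begin

locale lden =
  fixes S :: "'a::ring_1 set"
  assumes ld: "left_den S"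
begin

lemma one_S: "1 \<in> S"
  using ld by (auto simp: left_den_def left_ore_def mult_subset_def)
lemma zero_nS: "0 \<notin> S"
  using ld by (auto simp: left_den_def left_ore_def mult_subset_def)
lemma mult_S: "a \<in> S \<Longrightarrow> b \<in> S \<Longrightarrow> a*b \<in> S"
  using ld by (auto simp: left_den_def left_ore_def mult_subset_def)
lemma ore: "s \<in> S \<Longrightarrow> \<exists>t\<in>S. \<exists>a. t*r = a*s"
  using ld by (auto simp: left_den_def left_ore_def)
lemma den: "s \<in> S \<Longrightarrow> r*s = 0 \<Longrightarrow> \<exists>t\<in>S. t*r = 0"
  using ld by (auto simp: left_den_def)

lemma cancel:
  assumes "s \<in> S" "x*s = y*s" shows "\<exists>e\<in>S. e*x = e*y"
proof -
  have "(x-y)*s = 0" using assms by (simp add: left_diff_distrib)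
  then obtain t where "t\<in>S" "t*(x-y) = 0" using den assms(1) by blast
  thus ?thesis by (auto simp: right_diff_distrib)
qed

lemma rel_iff: "((s,r),(s',r')) \<in> loc_rel S \<longleftrightarrow> s\<in>S \<and> s'\<in>S \<and>
   (\<exists>a a'. a*s = a'*s' \<and> a*s \<in> S \<and> a*r = a'*r')"
  by (simp add: loc_rel_def)

lemma rel_trans:
  assumes h1: "((s1,r1),(s2,r2)) \<in> loc_rel S" and h2: "((s2,r2),(s3,r3)) \<in> loc_rel S"
  shows "((s1,r1),(s3,r3)) \<in> loc_rel S"
proof -
  from h1 obtain a1 a2 where S12: "s1 \<in> S" "s2 \<in> S" and e1: "a1*s1 = a2*s2" "a1*s1 \<in> S" "a1*r1 = a2*r2"
    by (auto simp: rel_iff)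
  from h2 obtain b2 b3 where S3: "s3 \<in> S" and e2: "b2*s2 = b3*s3" "b2*s2 \<in> S" "b2*r2 = b3*r3"
    by (auto simp: rel_iff)
  have uS: "a2*s2 \<in> S" using e1 by simp
  obtain c d where cS: "c \<in> S" and cd: "c*(b2*s2) = d*(a2*s2)" using ore[OF uS] by blast
  have "(c*b2)*s2 = (d*a2)*s2" using cd by (simp add: mult.assoc)
  then obtain e where eS: "e \<in> S" and ee: "e*(c*b2) = e*(d*a2)" using cancel S12 by blast
  have ee': "e*d*a2 = e*c*b2" using ee by (simp add: mult.assoc)
  have mid: "(e*d*a1)*s1 = (e*c)*(b2*s2)"
  proof -
    have "(e*d*a1)*s1 = (e*d)*(a1*s1)" by (simp add: mult.assoc)
    also have "\<dots> = (e*d)*(a2*s2)" using e1 by simp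
    also have "\<dots> = (e*d*a2)*s2" by (simp add: mult.assoc)
    also have "\<dots> = (e*c*b2)*s2" using ee' by simp
    also have "\<dots> = (e*c)*(b2*s2)" by (simp add: mult.assoc)
    finally show ?thesis .
  qed
  have A1: "(e*d*a1)*s1 = (e*c*b3)*s3" using mid e2 by (simp add: mult.assoc)
  have A2: "(e*d*a1)*s1 \<in> S" using mid eS cS e2 mult_S by metis
  have A3: "(e*d*a1)*r1 = (e*c*b3)*r3"
  proof -
    have "(e*d*a1)*r1 = (e*d)*(a1*r1)" by (simp add: mult.assoc)
    also have "\<dots> = (e*d)*(a2*r2)" using e1 by simp
    also have "\<dots> = (e*d*a2)*r2" by (simp add: mult.assoc)
    also have "\<dots> = (e*c*b2)*r2" using ee' by simp
    also have "\<dots> = (e*c)*(b2*r2)" by (simp add: mult.assoc)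
    also have "\<dots> = (e*c)*(b3*r3)" using e2 by simp
    also have "\<dots> = (e*c*b3)*r3" by (simp add: mult.assoc)
    finally show ?thesis .
  qed
  show ?thesis using S12 S3 A1 A2 A3 unfolding rel_iff by blast
qed

lemma equiv_rel: "equiv (S \<times> UNIV) (loc_rel S)"
proof (rule equivI)
  show "loc_rel S \<subseteq> (S \<times> UNIV) \<times> (S \<times> UNIV)" by (auto simp: loc_rel_def)
  show "refl_on (S \<times> UNIV) (loc_rel S)"
    unfolding refl_on_def by (auto simp: rel_iff intro!: exI[of _ 1])
  show "sym (loc_rel S)"
    unfolding sym_def by (auto simp: rel_iff) (metis)
  show "trans (loc_rel S)"
    unfolding trans_def using rel_trans by fast
qed

lemma cls_eq: "s\<in>S \<Longrightarrow> s'\<in>S \<Longrightarrow> loc_class S s r = loc_class S s' r' \<longleftrightarrow> ((s,r),(s',r')) \<in> loc_rel S"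
  unfolding loc_class_def by (rule eq_equiv_class_iff[OF equiv_rel]) auto

lemma cls_eqI: "s\<in>S \<Longrightarrow> s'\<in>S \<Longrightarrow> a*s = a'*s' \<Longrightarrow> a*s\<in>S \<Longrightarrow> a*r = a'*r' \<Longrightarrow>
   loc_class S s r = loc_class S s' r'"
proof -
  assume a: "s\<in>S" "s'\<in>S" "a*s = a'*s'" "a*s\<in>S" "a*r = a'*r'"
  hence "((s,r),(s',r')) \<in> loc_rel S" unfolding rel_iff by blast
  thus ?thesis using cls_eq a by blast
qed

lemma expand: "s\<in>S \<Longrightarrow> b*s\<in>S \<Longrightarrow> loc_class S (b*s) (b*r) = loc_class S s r"
  by (rule cls_eqI[of _ _ 1 b]) auto

lemma self_mem: "s\<in>S \<Longrightarrow> (s,r) \<in> loc_class S s r"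
  unfolding loc_class_def using equiv_rel by (auto simp: rel_iff intro!: exI[of _ 1])

lemma mem_cls: "(s1,r1) \<in> loc_class S s r \<Longrightarrow>
   \<exists>b' b. s\<in>S \<and> s1\<in>S \<and> b'*s = b*s1 \<and> b*s1 \<in> S \<and> b'*r = b*r1"
proof -
  assume "(s1,r1) \<in> loc_class S s r"
  then have "((s,r),(s1,r1)) \<in> loc_rel S" by (simp add: loc_class_def)
  then obtain a a' where "s\<in>S" "s1\<in>S" "a*s = a'*s1" "a*s \<in> S" "a*r = a'*r1" by (auto simp: rel_iff)
  thus ?thesis by (intro exI[of _ a] exI[of _ a']) simp
qed

lemma carrier_iff: "X \<in> carrier (left_loc S) \<longleftrightarrow> (\<exists>s r. s\<in>S \<and> X = loc_class S s r)"
  by (auto simp: left_loc_def quotient_def loc_class_def)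

lemma add_indep:
  assumes sS: "s\<in>S" "s'\<in>S" and h1: "t1*s\<in>S" "t1*s = a1*s'" and h2: "t2*s\<in>S" "t2*s = a2*s'"
  shows "loc_class S (t1*s) (t1*r + a1*r') = loc_class S (t2*s) (t2*r + a2*r')"
proof -
  obtain c d where cS: "c\<in>S" and cd: "c*(t1*s) = d*(t2*s)" using ore[OF h2(1), of "t1*s"] by blast
  have "(c*t1)*s = (d*t2)*s" using cd by (simp add: mult.assoc)
  from cancel[OF sS(1) this] obtain e where eS: "e\<in>S" and ee0: "e*(c*t1) = e*(d*t2)" by blast
  have ee: "e*c*t1 = e*d*t2" using ee0 by (simp add: mult.assoc)
  have "(e*c*a1)*s' = (e*d*a2)*s'"
  proof -
    have "(e*c*a1)*s' = e*c*(a1*s')" by (simp add: mult.assoc)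
    also have "\<dots> = e*c*(t1*s)" using h1 by simp
    also have "\<dots> = (e*c*t1)*s" by (simp add: mult.assoc)
    also have "\<dots> = (e*d*t2)*s" using ee by simp
    also have "\<dots> = e*d*(a2*s')" using h2 by (simp add: mult.assoc)
    finally show ?thesis by (simp add: mult.assoc)
  qed
  from cancel[OF sS(2) this] obtain e' where e'S: "e'\<in>S" and ee0': "e'*(e*c*a1) = e'*(e*d*a2)" by blast
  have ee': "e'*e*c*a1 = e'*e*d*a2" using ee0' by (simp add: mult.assoc)
  have mt: "e'*e*c*t1 = e'*e*d*t2" using ee by (simp add: mult.assoc)
  have mS: "e'*e*c \<in> S" using e'S eS cS mult_S by blast
  show ?thesis
  proof (rule cls_eqI[of _ _ "e'*e*c" "e'*e*d"])
    show "t1*s\<in>S" "t2*s\<in>S" by fact+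
    show "e'*e*c*(t1*s) = e'*e*d*(t2*s)" using mt by (simp add: mult.assoc[symmetric])
    show "e'*e*c*(t1*s) \<in> S" using mS h1 mult_S by blast
    show "e'*e*c*(t1*r + a1*r') = e'*e*d*(t2*r + a2*r')" using mt ee'
      by (simp add: distrib_left mult.assoc[symmetric])
  qed
qed

lemma add_expand:
  assumes "s\<in>S" "s'\<in>S" "t*(b*s)\<in>S" "t*(b*s) = a*(c*s')" "t2*s\<in>S" "t2*s = a2*s'"
  shows "loc_class S (t*(b*s)) (t*(b*r) + a*(c*r')) = loc_class S (t2*s) (t2*r + a2*r')"
  using add_indep[of s s' "t*b" "a*c" t2 a2 r r'] assms by (simp add: mult.assoc)

lemma add_val:
  assumes X: "X = loc_class S s r" and Y: "Y = loc_class S s' r'" and sS: "s\<in>S" "s'\<in>S"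
    and tS: "t\<in>S" and ta: "t*s = a*s'"
  shows "loc_add S X Y = loc_class S (t*s) (t*r + a*r')"
  unfolding loc_add_def
proof (rule some_equality)
  show "\<exists>s1 r1 s1' r1' t1 a1. (s1, r1) \<in> X \<and> (s1', r1') \<in> Y \<and> t1 \<in> S \<and> t1 * s1 = a1 * s1' \<and>
      loc_class S (t*s) (t*r + a*r') = loc_class S (t1 * s1) (t1 * r1 + a1 * r1')"
    using X Y sS tS ta self_mem by blast
next
  fix Z assume "\<exists>s1 r1 s1' r1' t1 a1. (s1, r1) \<in> X \<and> (s1', r1') \<in> Y \<and> t1 \<in> S \<and> t1 * s1 = a1 * s1' \<and>
      Z = loc_class S (t1 * s1) (t1 * r1 + a1 * r1')"
  then obtain s1 r1 s1' r1' t1 a1 where m1: "(s1, r1) \<in> X" and m2: "(s1', r1') \<in> Y" and t1S: "t1\<in>S"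
    and t1a: "t1 * s1 = a1 * s1'" and Z: "Z = loc_class S (t1 * s1) (t1 * r1 + a1 * r1')" by blast
  obtain b' b where s1S: "s1\<in>S" and bb: "b'*s = b*s1" "b*s1 \<in> S" "b'*r = b*r1"
    using mem_cls m1 X by blast
  obtain c' c where s1'S: "s1'\<in>S" and cc: "c'*s' = c*s1'" "c*s1' \<in> S" "c'*r' = c*r1'"
    using mem_cls m2 Y by blast
  obtain t3 a3 where t3S: "t3\<in>S" and t3a: "t3*(b*s1) = a3*(c*s1')" using ore[OF cc(2), of "b*s1"] by blast
  have t3pS: "t3*(b*s1) \<in> S" using t3S bb mult_S by blast
  have "Z = loc_class S (t3*(b*s1)) (t3*(b*r1) + a3*(c*r1'))"
    unfolding Z by (rule add_expand[OF s1S s1'S t3pS t3a mult_S[OF t1S s1S] t1a, symmetric])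
  also have "\<dots> = loc_class S (t3*(b'*s)) (t3*(b'*r) + a3*(c'*r'))" using bb cc by simp
  also have "\<dots> = loc_class S (t*s) (t*r + a*r')"
  proof -
    have p1: "t3*(b'*s) \<in> S" "t3*(b'*s) = a3*(c'*s')" using t3pS t3a bb cc by simp_all
    show ?thesis by (rule add_expand[OF sS p1 mult_S[OF tS sS(1)] ta])
  qed
  finally show "Z = loc_class S (t*s) (t*r + a*r')" .
qed

lemma mult_indep:
  assumes sS: "s\<in>S" "s'\<in>S" and h1: "u1*s\<in>S" "u1*r = v1*s'" and h2: "u2*s\<in>S" "u2*r = v2*s'"
  shows "loc_class S (u1*s) (v1*r') = loc_class S (u2*s) (v2*r')"
proof -
  obtain c d where cS: "c\<in>S" and cd: "c*(u1*s) = d*(u2*s)" using ore[OF h2(1), of "u1*s"] by blast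
  have "(c*u1)*s = (d*u2)*s" using cd by (simp add: mult.assoc)
  from cancel[OF sS(1) this] obtain e where eS: "e\<in>S" and ee0: "e*(c*u1) = e*(d*u2)" by blast
  have ee: "e*c*u1 = e*d*u2" using ee0 by (simp add: mult.assoc)
  have "(e*c*v1)*s' = (e*d*v2)*s'"
  proof -
    have "(e*c*v1)*s' = e*c*(v1*s')" by (simp add: mult.assoc)
    also have "\<dots> = e*c*(u1*r)" using h1 by simp
    also have "\<dots> = (e*c*u1)*r" by (simp add: mult.assoc)
    also have "\<dots> = (e*d*u2)*r" using ee by simp
    also have "\<dots> = e*d*(v2*s')" using h2 by (simp add: mult.assoc)
    finally show ?thesis by (simp add: mult.assoc)
  qed
  from cancel[OF sS(2) this] obtain e' where e'S: "e'\<in>S" and ee0': "e'*(e*c*v1) = e'*(e*d*v2)" by blast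
  have ee': "e'*e*c*v1 = e'*e*d*v2" using ee0' by (simp add: mult.assoc)
  have mt: "e'*e*c*u1 = e'*e*d*u2" using ee by (simp add: mult.assoc)
  have mS: "e'*e*c \<in> S" using e'S eS cS mult_S by blast
  show ?thesis
  proof (rule cls_eqI[of _ _ "e'*e*c" "e'*e*d"])
    show "u1*s\<in>S" "u2*s\<in>S" by fact+
    show "e'*e*c*(u1*s) = e'*e*d*(u2*s)" using mt by (simp add: mult.assoc[symmetric])
    show "e'*e*c*(u1*s) \<in> S" using mS h1 mult_S by blast
    show "e'*e*c*(v1*r') = e'*e*d*(v2*r')" using ee' by (simp add: mult.assoc[symmetric])
  qed
qed

lemma mult_expand:
  assumes "s\<in>S" "s'\<in>S" "u*(b*s)\<in>S" "u*(b*r) = v*(c*s')" "u2*s\<in>S" "u2*r = v2*s'"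
  shows "loc_class S (u*(b*s)) (v*(c*r')) = loc_class S (u2*s) (v2*r')"
  using mult_indep[of s s' "u*b" r "v*c" u2 v2 r'] assms by (simp add: mult.assoc)

lemma mult_val:
  assumes X: "X = loc_class S s r" and Y: "Y = loc_class S s' r'" and sS: "s\<in>S" "s'\<in>S"
    and uS: "u*s\<in>S" and uv: "u*r = v*s'"
  shows "loc_mult S X Y = loc_class S (u*s) (v*r')"
  unfolding loc_mult_def
proof (rule some_equality)
  obtain u0 v0 where u0S: "u0\<in>S" and u0v: "u0*r = v0*s'" using ore[OF sS(2), of r] by blast
  have "loc_class S (u0*s) (v0*r') = loc_class S (u*s) (v*r')"
    using mult_indep[OF sS, of u0 r v0 u v r'] u0S u0v uS uv sS mult_S by blast
  thus "\<exists>s1 r1 s1' r1' u1 v1. (s1, r1) \<in> X \<and> (s1', r1') \<in> Y \<and> u1 \<in> S \<and> u1 * r1 = v1 * s1' \<and>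
      loc_class S (u*s) (v*r') = loc_class S (u1 * s1) (v1 * r1')"
    using X Y sS u0S u0v self_mem by blast
next
  fix Z assume "\<exists>s1 r1 s1' r1' u1 v1. (s1, r1) \<in> X \<and> (s1', r1') \<in> Y \<and> u1 \<in> S \<and> u1 * r1 = v1 * s1' \<and>
      Z = loc_class S (u1 * s1) (v1 * r1')"
  then obtain s1 r1 s1' r1' u1 v1 where m1: "(s1, r1) \<in> X" and m2: "(s1', r1') \<in> Y" and u1S: "u1\<in>S"
    and u1v: "u1 * r1 = v1 * s1'" and Z: "Z = loc_class S (u1 * s1) (v1 * r1')" by blast
  obtain b' b where s1S: "s1\<in>S" and bb: "b'*s = b*s1" "b*s1 \<in> S" "b'*r = b*r1"
    using mem_cls m1 X by blast
  obtain c' c where s1'S: "s1'\<in>S" and cc: "c'*s' = c*s1'" "c*s1' \<in> S" "c'*r' = c*r1'"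
    using mem_cls m2 Y by blast
  obtain u3 v3 where u3S: "u3\<in>S" and u3v: "u3*(b*r1) = v3*(c*s1')" using ore[OF cc(2), of "b*r1"] by blast
  have u3pS: "u3*(b*s1) \<in> S" using u3S bb mult_S by blast
  have "Z = loc_class S (u3*(b*s1)) (v3*(c*r1'))"
    unfolding Z by (rule mult_expand[OF s1S s1'S u3pS u3v mult_S[OF u1S s1S] u1v, symmetric])
  also have "\<dots> = loc_class S (u3*(b'*s)) (v3*(c'*r'))" using bb cc by simp
  also have "\<dots> = loc_class S (u*s) (v*r')"
  proof -
    have p1: "u3*(b'*s) \<in> S" "u3*(b'*r) = v3*(c'*s')" using u3pS u3v bb cc by simp_all
    show ?thesis by (rule mult_expand[OF sS p1 uS uv])
  qed
  finally show "Z = loc_class S (u*s) (v*r')" .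
qed

lemma Q_iff: "X \<in> (S \<times> UNIV) // loc_rel S \<longleftrightarrow> (\<exists>s r. s\<in>S \<and> X = loc_class S s r)"
  using carrier_iff by (simp add: left_loc_def)

lemma QE: assumes "X \<in> (S \<times> UNIV) // loc_rel S" obtains s r where "s\<in>S" "X = loc_class S s r"
  using assms Q_iff by blast

lemma QI: "s\<in>S \<Longrightarrow> loc_class S s r \<in> (S \<times> UNIV) // loc_rel S"
  using Q_iff by blast

lemma cd2:
  assumes "X \<in> (S \<times> UNIV) // loc_rel S" "Y \<in> (S \<times> UNIV) // loc_rel S"
  obtains u x y where "u\<in>S" "X = loc_class S u x" "Y = loc_class S u y"
proof -
  obtain s r where sS: "s\<in>S" and X: "X = loc_class S s r" using assms(1) QE by blast
  obtain s' r' where s'S: "s'\<in>S" and Y: "Y = loc_class S s' r'" using assms(2) QE by blast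
  obtain t a where tS: "t\<in>S" and ta: "t*s = a*s'" using ore[OF s'S, of s] by blast
  have uS: "t*s \<in> S" using tS sS mult_S by blast
  have "X = loc_class S (t*s) (t*r)" using X expand[OF sS uS] by simp
  moreover have "Y = loc_class S (t*s) (a*r')" using Y expand[OF s'S, of a r'] uS ta by simp
  ultimately show ?thesis using that uS by blast
qed

lemma rebase:
  assumes "X \<in> (S \<times> UNIV) // loc_rel S" "u\<in>S"
  obtains t z where "t\<in>S" "X = loc_class S (t*u) z"
proof -
  obtain s r where sS: "s\<in>S" and X: "X = loc_class S s r" using assms(1) QE by blast
  obtain t a where tS: "t\<in>S" and ta: "t*u = a*s" using ore[OF sS, of u] by blast
  have uS: "t*u \<in> S" using tS assms(2) mult_S by blast
  have "X = loc_class S (t*u) (a*r)" using X expand[OF sS, of a r] uS ta by simp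
  thus ?thesis using that tS by blast
qed

lemma cd3:
  assumes "X \<in> (S \<times> UNIV) // loc_rel S" "Y \<in> (S \<times> UNIV) // loc_rel S" "Z \<in> (S \<times> UNIV) // loc_rel S"
  obtains u x y z where "u\<in>S" "X = loc_class S u x" "Y = loc_class S u y" "Z = loc_class S u z"
proof -
  obtain u x y where uS: "u\<in>S" and X: "X = loc_class S u x" and Y: "Y = loc_class S u y"
    using cd2[OF assms(1,2)] by blast
  obtain t z where tS: "t\<in>S" and Z: "Z = loc_class S (t*u) z" using rebase[OF assms(3) uS] by blast
  have tuS: "t*u\<in>S" using tS uS mult_S by blast
  show ?thesis by (rule that[OF tuS _ _ Z, of "t*x" "t*y"]) (simp_all add: X Y expand[OF uS tuS])
qed

lemma add_same: "u\<in>S \<Longrightarrow> loc_add S (loc_class S u x) (loc_class S u y) = loc_class S u (x+y)"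
  using add_val[of _ u x _ u y 1 1] one_S by simp

lemma zero_eq: "u\<in>S \<Longrightarrow> loc_class S 1 0 = loc_class S u 0"
  using expand[OF one_S, of u 0] by simp

lemma one_eq: "u\<in>S \<Longrightarrow> loc_class S 1 1 = loc_class S u u"
  using expand[OF one_S, of u 1] by simp

lemma mult_closed:
  assumes "X \<in> (S \<times> UNIV) // loc_rel S" "Y \<in> (S \<times> UNIV) // loc_rel S"
  shows "loc_mult S X Y \<in> (S \<times> UNIV) // loc_rel S"
proof -
  obtain s r where sS: "s\<in>S" and X: "X = loc_class S s r" using assms(1) QE by blast
  obtain s' r' where s'S: "s'\<in>S" and Y: "Y = loc_class S s' r'" using assms(2) QE by blast
  obtain u v where uS: "u\<in>S" and uv: "u*r = v*s'" using ore[OF s'S, of r] by blast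
  have "u*s\<in>S" using uS sS mult_S by blast
  thus ?thesis using mult_val[OF X Y sS s'S _ uv] QI by simp
qed

lemma ring_loc: "ring (left_loc S)"
proof (rule ringI)
  show "abelian_group (left_loc S)"
  proof (rule abelian_groupI, simp_all add: left_loc_def)
    fix X Y assume a: "X \<in> (S \<times> UNIV) // loc_rel S" "Y \<in> (S \<times> UNIV) // loc_rel S"
    then obtain u x y where "u\<in>S" "X = loc_class S u x" "Y = loc_class S u y" by (rule cd2)
    thus "loc_add S X Y \<in> (S \<times> UNIV) // loc_rel S" using add_same QI by simp
  next
    show "loc_class S 1 0 \<in> (S \<times> UNIV) // loc_rel S" using QI one_S by blast
  next
    fix X Y Z assume a: "X \<in> (S \<times> UNIV) // loc_rel S" "Y \<in> (S \<times> UNIV) // loc_rel S"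
      "Z \<in> (S \<times> UNIV) // loc_rel S"
    then obtain u x y z where "u\<in>S" "X = loc_class S u x" "Y = loc_class S u y" "Z = loc_class S u z"
      by (rule cd3)
    thus "loc_add S (loc_add S X Y) Z = loc_add S X (loc_add S Y Z)" using add_same
      by (simp add: add.assoc)
  next
    fix X Y assume a: "X \<in> (S \<times> UNIV) // loc_rel S" "Y \<in> (S \<times> UNIV) // loc_rel S"
    then obtain u x y where "u\<in>S" "X = loc_class S u x" "Y = loc_class S u y" by (rule cd2)
    thus "loc_add S X Y = loc_add S Y X" using add_same by (simp add: add.commute)
  next
    fix X assume "X \<in> (S \<times> UNIV) // loc_rel S"
    then obtain s r where "s\<in>S" "X = loc_class S s r" by (rule QE)
    thus "loc_add S (loc_class S 1 0) X = X" using add_same zero_eq by simp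
  next
    fix X assume "X \<in> (S \<times> UNIV) // loc_rel S"
    then obtain s r where sS: "s\<in>S" and X: "X = loc_class S s r" by (rule QE)
    have "loc_add S (loc_class S s (-r)) X = loc_class S 1 0" using add_same zero_eq sS X by simp
    thus "\<exists>y\<in>(S \<times> UNIV) // loc_rel S. loc_add S y X = loc_class S 1 0" using QI sS by blast
  qed
next
  show "monoid (left_loc S)"
  proof (rule monoidI, simp_all add: left_loc_def)
    fix X Y assume "X \<in> (S \<times> UNIV) // loc_rel S" "Y \<in> (S \<times> UNIV) // loc_rel S"
    thus "loc_mult S X Y \<in> (S \<times> UNIV) // loc_rel S" by (rule mult_closed)
  next
    show "loc_class S 1 1 \<in> (S \<times> UNIV) // loc_rel S" using QI one_S by blast
  next
    fix X Y Z assume a: "X \<in> (S \<times> UNIV) // loc_rel S" "Y \<in> (S \<times> UNIV) // loc_rel S"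
      "Z \<in> (S \<times> UNIV) // loc_rel S"
    obtain s1 r1 where s1S: "s1\<in>S" and X: "X = loc_class S s1 r1" using a(1) QE by blast
    obtain s2 r2 where s2S: "s2\<in>S" and Y: "Y = loc_class S s2 r2" using a(2) QE by blast
    obtain s3 r3 where s3S: "s3\<in>S" and Z: "Z = loc_class S s3 r3" using a(3) QE by blast
    obtain u2 v2 where u2S: "u2\<in>S" and uv2: "u2*r2 = v2*s3" using ore[OF s3S, of r2] by blast
    have u2s2: "u2*s2 \<in> S" using u2S s2S mult_S by blast
    have YZ: "loc_mult S Y Z = loc_class S (u2*s2) (v2*r3)" by (rule mult_val[OF Y Z s2S s3S u2s2 uv2])
    obtain w z where wS: "w\<in>S" and wz: "w*r1 = z*(u2*s2)" using ore[OF u2s2, of r1] by blast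
    have ws1: "w*s1\<in>S" using wS s1S mult_S by blast
    have XYZ: "loc_mult S X (loc_mult S Y Z) = loc_class S (w*s1) (z*(v2*r3))"
      unfolding YZ by (rule mult_val[OF X refl s1S u2s2 ws1 wz])
    have XY: "loc_mult S X Y = loc_class S (w*s1) ((z*u2)*r2)"
      by (rule mult_val[OF X Y s1S s2S ws1]) (simp add: wz mult.assoc)
    have XY_Z: "loc_mult S (loc_mult S X Y) Z = loc_class S (1*(w*s1)) ((z*v2)*r3)"
      unfolding XY by (rule mult_val[OF refl Z ws1 s3S]) (simp_all add: ws1 mult.assoc uv2)
    show "loc_mult S (loc_mult S X Y) Z = loc_mult S X (loc_mult S Y Z)"
      using XYZ XY_Z by (simp add: mult.assoc)
  next
    fix X assume "X \<in> (S \<times> UNIV) // loc_rel S"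
    then obtain s r where sS: "s\<in>S" and X: "X = loc_class S s r" by (rule QE)
    have "loc_mult S (loc_class S 1 1) X = loc_class S (s*1) (1*r)"
      by (rule mult_val[OF refl X one_S sS]) (simp_all add: sS)
    thus "loc_mult S (loc_class S 1 1) X = X" using X by simp
  next
    fix X assume "X \<in> (S \<times> UNIV) // loc_rel S"
    then obtain s r where sS: "s\<in>S" and X: "X = loc_class S s r" by (rule QE)
    have "loc_mult S X (loc_class S 1 1) = loc_class S (1*s) (r*1)"
      by (rule mult_val[OF X refl sS one_S]) (simp_all add: sS)
    thus "loc_mult S X (loc_class S 1 1) = X" using X by simp
  qed
next
  fix X Y Z assume a: "X \<in> carrier (left_loc S)" "Y \<in> carrier (left_loc S)" "Z \<in> carrier (left_loc S)"
  hence a': "X \<in> (S \<times> UNIV) // loc_rel S" "Y \<in> (S \<times> UNIV) // loc_rel S"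
      "Z \<in> (S \<times> UNIV) // loc_rel S" by (simp_all add: left_loc_def)
  obtain s x y where sS: "s\<in>S" and X: "X = loc_class S s x" and Y: "Y = loc_class S s y"
    using cd2[OF a'(1,2)] by blast
  obtain s' r' where s'S: "s'\<in>S" and Z: "Z = loc_class S s' r'" using a'(3) QE by blast
  obtain u1 v1 where u1S: "u1\<in>S" and uv1: "u1*x = v1*s'" using ore[OF s'S, of x] by blast
  obtain u2 v2 where u2S: "u2\<in>S" and uv2: "u2*(u1*y) = v2*s'" using ore[OF s'S, of "u1*y"] by blast
  have uS: "(u2*u1)*s \<in> S" using u1S u2S sS mult_S by blast
  have XZ: "loc_mult S X Z = loc_class S ((u2*u1)*s) ((u2*v1)*r')"
    by (rule mult_val[OF X Z sS s'S uS]) (simp add: mult.assoc uv1)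
  have YZ: "loc_mult S Y Z = loc_class S ((u2*u1)*s) (v2*r')"
    by (rule mult_val[OF Y Z sS s'S uS]) (simp add: mult.assoc uv2)
  have XYZ: "loc_mult S (loc_class S s (x+y)) Z = loc_class S ((u2*u1)*s) ((u2*v1+v2)*r')"
    by (rule mult_val[OF refl Z sS s'S uS])
       (simp add: distrib_left distrib_right mult.assoc uv1 uv2[simplified mult.assoc])
  show "(X \<oplus>\<^bsub>left_loc S\<^esub> Y) \<otimes>\<^bsub>left_loc S\<^esub> Z =
        X \<otimes>\<^bsub>left_loc S\<^esub> Z \<oplus>\<^bsub>left_loc S\<^esub> Y \<otimes>\<^bsub>left_loc S\<^esub> Z"
    using XZ YZ XYZ add_same sS uS X Y by (simp add: left_loc_def distrib_right)
next
  fix X Y Z assume a: "X \<in> carrier (left_loc S)" "Y \<in> carrier (left_loc S)" "Z \<in> carrier (left_loc S)"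
  hence a': "X \<in> (S \<times> UNIV) // loc_rel S" "Y \<in> (S \<times> UNIV) // loc_rel S"
      "Z \<in> (S \<times> UNIV) // loc_rel S" by (simp_all add: left_loc_def)
  obtain s' x y where s'S: "s'\<in>S" and X: "X = loc_class S s' x" and Y: "Y = loc_class S s' y"
    using cd2[OF a'(1,2)] by blast
  obtain s r where sS: "s\<in>S" and Z: "Z = loc_class S s r" using a'(3) QE by blast
  obtain u v where uS0: "u\<in>S" and uv: "u*r = v*s'" using ore[OF s'S, of r] by blast
  have uS: "u*s\<in>S" using uS0 sS mult_S by blast
  have ZX: "loc_mult S Z X = loc_class S (u*s) (v*x)" by (rule mult_val[OF Z X sS s'S uS uv])
  have ZY: "loc_mult S Z Y = loc_class S (u*s) (v*y)" by (rule mult_val[OF Z Y sS s'S uS uv])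
  have ZXY: "loc_mult S Z (loc_class S s' (x+y)) = loc_class S (u*s) (v*(x+y))"
    by (rule mult_val[OF Z refl sS s'S uS uv])
  show "Z \<otimes>\<^bsub>left_loc S\<^esub> (X \<oplus>\<^bsub>left_loc S\<^esub> Y) =
        Z \<otimes>\<^bsub>left_loc S\<^esub> X \<oplus>\<^bsub>left_loc S\<^esub> Z \<otimes>\<^bsub>left_loc S\<^esub> Y"
    using ZX ZY ZXY add_same s'S uS X Y by (simp add: left_loc_def distrib_left)
qed

lemma phi_eq: "loc_class S 1 a = loc_class S 1 b \<longleftrightarrow> (\<exists>e\<in>S. e*a = e*b)"
proof
  assume "loc_class S 1 a = loc_class S 1 b"
  then obtain c c' where "c*1 = c'*1" "c*1\<in>S" "c*a = c'*b" using cls_eq[OF one_S one_S] rel_iff by blast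
  thus "\<exists>e\<in>S. e*a = e*b" by auto
next
  assume "\<exists>e\<in>S. e*a = e*b"
  then obtain e where "e\<in>S" "e*a = e*b" by blast
  thus "loc_class S 1 a = loc_class S 1 b" by (intro cls_eqI[OF one_S one_S, of e e]) auto
qed

lemma phi_zero_iff: "loc_class S 1 r = loc_class S 1 0 \<longleftrightarrow> r \<in> ass S"
  unfolding phi_eq ass_def by simp

lemma ass_zero: "s\<in>S \<Longrightarrow> r \<in> ass S \<Longrightarrow> loc_class S s r = loc_class S 1 0"
proof -
  assume sS: "s\<in>S" and "r \<in> ass S"
  then obtain e where eS: "e\<in>S" and er: "e*r = 0" by (auto simp: ass_def)
  have esS: "e*s\<in>S" using eS sS mult_S by blast
  have "loc_class S s r = loc_class S (e*s) (e*r)" using expand[OF sS esS] by simp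
  also have "\<dots> = loc_class S 1 0" using er zero_eq[OF esS] by simp
  finally show ?thesis .
qed

lemma phi_mult: "loc_class S 1 a \<otimes>\<^bsub>left_loc S\<^esub> loc_class S 1 b = loc_class S 1 (a*b)"
proof -
  have "loc_mult S (loc_class S 1 a) (loc_class S 1 b) = loc_class S (1*1) (a*b)"
    by (rule mult_val[OF refl refl one_S one_S]) (simp_all add: one_S)
  thus ?thesis by (simp add: left_loc_def)
qed

lemma phi_sX: "s\<in>S \<Longrightarrow> loc_class S 1 s \<otimes>\<^bsub>left_loc S\<^esub> loc_class S s x = loc_class S 1 x"
proof -
  assume sS: "s\<in>S"
  have "loc_mult S (loc_class S 1 s) (loc_class S s x) = loc_class S (1*1) (1*x)"
    by (rule mult_val[OF refl refl one_S sS]) (simp_all add: one_S)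
  thus ?thesis by (simp add: left_loc_def)
qed

lemma phi_carrier: "loc_class S 1 r \<in> carrier (left_loc S)"
  using carrier_iff one_S by blast

lemma S_sub: "S \<subseteq> UNIV - ass S"
  using zero_nS mult_S by (auto simp: ass_def) metis

lemma forward:
  assumes dr: "division_ring (left_loc S)"
  shows "left_den (UNIV - ass S)"
proof -
  interpret R: ring "left_loc S" using dr by (simp add: division_ring_def)
  have one_ne: "\<one>\<^bsub>left_loc S\<^esub> \<noteq> \<zero>\<^bsub>left_loc S\<^esub>" using dr by (simp add: division_ring_def)
  have zero: "\<zero>\<^bsub>left_loc S\<^esub> = loc_class S 1 0" by (simp add: left_loc_def)
  have unit_iff: "loc_class S 1 r \<in> Units (left_loc S) \<longleftrightarrow> r \<notin> ass S" for r
  proof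
    assume u: "loc_class S 1 r \<in> Units (left_loc S)"
    show "r \<notin> ass S"
    proof
      assume "r \<in> ass S"
      hence z: "loc_class S 1 r = \<zero>\<^bsub>left_loc S\<^esub>" using phi_zero_iff zero by simp
      have "\<one>\<^bsub>left_loc S\<^esub> = inv\<^bsub>left_loc S\<^esub> (loc_class S 1 r) \<otimes>\<^bsub>left_loc S\<^esub> loc_class S 1 r"
        using u by simp
      also have "\<dots> = \<zero>\<^bsub>left_loc S\<^esub>" unfolding z using u z by simp
      finally show False using one_ne by simp
    qed
  next
    assume "r \<notin> ass S"
    hence "loc_class S 1 r \<in> carrier (left_loc S) - {\<zero>\<^bsub>left_loc S\<^esub>}"
      using phi_zero_iff zero phi_carrier by simp
    thus "loc_class S 1 r \<in> Units (left_loc S)" using dr by (simp add: division_ring_def)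
  qed
  have ms: "mult_subset (UNIV - ass S)"
    unfolding mult_subset_def
  proof (intro conjI ballI)
    show "1 \<in> UNIV - ass S" using S_sub one_S by blast
    show "0 \<notin> UNIV - ass S" using one_S by (auto simp: ass_def)
    fix a b assume "a \<in> UNIV - ass S" "b \<in> UNIV - ass S"
    hence "loc_class S 1 a \<otimes>\<^bsub>left_loc S\<^esub> loc_class S 1 b \<in> Units (left_loc S)"
      using unit_iff R.Units_m_closed by blast
    thus "a*b \<in> UNIV - ass S" using unit_iff phi_mult by simp
  qed
  have ore': "\<exists>t'\<in>UNIV - ass S. \<exists>a. t'*r = a*t" if tT: "t \<in> UNIV - ass S" for r t
  proof -
    let ?L = "left_loc S"
    have ut: "loc_class S 1 t \<in> Units ?L" using unit_iff tT by simp
    define X where "X = loc_class S 1 r \<otimes>\<^bsub>?L\<^esub> inv\<^bsub>?L\<^esub> (loc_class S 1 t)"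
    have Xc: "X \<in> carrier ?L" unfolding X_def using ut phi_carrier by simp
    obtain s x where sS: "s\<in>S" and Xe: "X = loc_class S s x" using Xc carrier_iff by blast
    have Xt: "X \<otimes>\<^bsub>?L\<^esub> loc_class S 1 t = loc_class S 1 r"
      unfolding X_def using ut phi_carrier by (simp add: R.m_assoc)
    have "loc_class S 1 (s*r) = loc_class S 1 s \<otimes>\<^bsub>?L\<^esub> loc_class S 1 r" by (simp add: phi_mult)
    also have "\<dots> = loc_class S 1 s \<otimes>\<^bsub>?L\<^esub> (X \<otimes>\<^bsub>?L\<^esub> loc_class S 1 t)" using Xt by simp
    also have "\<dots> = (loc_class S 1 s \<otimes>\<^bsub>?L\<^esub> X) \<otimes>\<^bsub>?L\<^esub> loc_class S 1 t"
      using Xc phi_carrier by (simp add: R.m_assoc)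
    also have "\<dots> = loc_class S 1 (x*t)" using phi_sX[OF sS] Xe phi_mult by simp
    finally obtain e where eS: "e\<in>S" and ee: "e*(s*r) = e*(x*t)" using phi_eq by blast
    have "(e*s)*r = (e*x)*t" using ee by (simp add: mult.assoc)
    moreover have "e*s \<in> UNIV - ass S" using eS sS mult_S S_sub by blast
    ultimately show ?thesis by blast
  qed
  have den': "\<exists>t'\<in>UNIV - ass S. t'*r = 0" if tT: "t \<in> UNIV - ass S" and rt: "r*t = 0" for r t
  proof -
    let ?L = "left_loc S"
    have ut: "loc_class S 1 t \<in> Units ?L" using unit_iff tT by simp
    have z: "loc_class S 1 r \<otimes>\<^bsub>?L\<^esub> loc_class S 1 t = \<zero>\<^bsub>?L\<^esub>" using rt phi_mult zero by simp
    have "loc_class S 1 r = loc_class S 1 r \<otimes>\<^bsub>?L\<^esub> (loc_class S 1 t \<otimes>\<^bsub>?L\<^esub> inv\<^bsub>?L\<^esub> (loc_class S 1 t))"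
      using ut phi_carrier by simp
    also have "\<dots> = (loc_class S 1 r \<otimes>\<^bsub>?L\<^esub> loc_class S 1 t) \<otimes>\<^bsub>?L\<^esub> inv\<^bsub>?L\<^esub> (loc_class S 1 t)"
      using ut phi_carrier by (simp add: R.m_assoc)
    also have "\<dots> = \<zero>\<^bsub>?L\<^esub>" unfolding z using ut by simp
    finally have "r \<in> ass S" using zero phi_zero_iff by simp
    then obtain e where "e\<in>S" "e*r = 0" by (auto simp: ass_def)
    thus ?thesis using S_sub by blast
  qed
  show ?thesis unfolding left_den_def left_ore_def using ms ore' den' by blast
qed

lemma backward:
  assumes U: "UNIV = S \<union> ass S"
  shows "division_ring (left_loc S)"
  unfolding division_ring_def
proof (intro conjI ballI)
  show "ring (left_loc S)" by (rule ring_loc)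
  show "\<one>\<^bsub>left_loc S\<^esub> \<noteq> \<zero>\<^bsub>left_loc S\<^esub>"
  proof
    assume "\<one>\<^bsub>left_loc S\<^esub> = \<zero>\<^bsub>left_loc S\<^esub>"
    hence "(1::'a) \<in> ass S" using phi_zero_iff by (simp add: left_loc_def)
    thus False using S_sub one_S by blast
  qed
  fix X assume X: "X \<in> carrier (left_loc S) - {\<zero>\<^bsub>left_loc S\<^esub>}"
  then obtain s r where sS: "s\<in>S" and Xe: "X = loc_class S s r" using carrier_iff by blast
  have "r \<notin> ass S" using X Xe ass_zero sS by (auto simp: left_loc_def)
  hence rS: "r\<in>S" using U by blast
  have Y: "loc_class S r s \<in> carrier (left_loc S)" using carrier_iff rS by blast
  have 1: "loc_mult S (loc_class S r s) X = loc_class S (1*r) (1*r)"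
    by (rule mult_val[OF refl Xe rS sS]) (simp_all add: rS)
  have 2: "loc_mult S X (loc_class S r s) = loc_class S (1*s) (1*s)"
    by (rule mult_val[OF Xe refl sS rS]) (simp_all add: sS)
  show "X \<in> Units (left_loc S)"
    unfolding Units_def using X Y 1 2 one_eq[OF rS] one_eq[OF sS] by (auto simp: left_loc_def)
qed

end

theorem lemma3p4:
  fixes S :: "'a::ring_1 set"
  assumes "S \<in> maxDen_l"
  shows "division_ring (left_loc S) \<longleftrightarrow> UNIV = S \<union> ass S"
proof -
  have ld: "left_den S" and mx: "\<And>T. left_den T \<Longrightarrow> S \<subseteq> T \<Longrightarrow> T = S"
    using assms by (auto simp: maxDen_l_def)
  interpret lden S by (rule lden.intro[OF ld])
  show ?thesis
  proof
    assume "division_ring (left_loc S)"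
    hence "UNIV - ass S = S" using mx forward S_sub by blast
    thus "UNIV = S \<union> ass S" by blast
  next
    assume "UNIV = S \<union> ass S"
    thus "division_ring (left_loc S)" by (rule backward)
  qed
qed

end
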